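(* Let $a_i:\mathbb{R}^n\to\mathbb{R}$ be convex and $L_a$-smooth, and suppose there exist $C_0>0$, $C_1\ge0$ with $\|\nabla a_i(x)\|_2^2\le C_0+C_1|a_i(x)|$ for all $x\in\mathbb{R}^n$. Then for every $\delta>0$, the function $x\mapsto p_\delta(a_i(x))$ is $\left(L_a+\frac{C_1}{4}+\frac{C_0}{4\delta}\right)$-smooth, i.e., its gradient is Lipschitz with this constant in the Euclidean norm.
   Context: $p_\delta(t)=\delta\log(1+\exp(t/\delta))$ is the softplus function with parameter $\delta>0$. A function is $L$-smooth if its gradient is $L$-Lipschitz w.r.t. $\|\cdot\|_2$. *)

theory Defs
  imports "HOL-Analysis.Analysis"
begin

definition softplus :: "real \<Rightarrow> real \<Rightarrow> real" where
  "softplus \<delta> t = \<delta> * ln (1 + exp (t / \<delta>))"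

definition L_smooth :: "('a::real_inner \<Rightarrow> real) \<Rightarrow> real \<Rightarrow> bool" where
  "L_smooth f L \<longleftrightarrow> (\<exists>g. (\<forall>x. (f has_derivative (\<lambda>h. g x \<bullet> h)) (at x)) \<and>
                          (\<forall>x y. norm (g x - g y) \<le> L * norm (x - y)))"

end

theory Submission imports Defs begin
lemma exp_taylor3: "exp (z::real) \<ge> 1 + z + z^2/2 + z^3/6"
proof -
  obtain t where "exp z = (\<Sum>m<4. (z ^ m) / fact m) + (exp t / fact 4) * z ^ 4"
    using Maclaurin_exp_le[of z 4] by blast
  moreover have "(exp t / fact 4) * z ^ 4 \<ge> 0" by simp
  moreover have "(\<Sum>m<4. (z ^ m) / fact m) = 1 + z + z^2/2 + z^3/6"
    by (simp add: eval_nat_numeral fact_numeral)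
  ultimately show ?thesis by linarith
qed

lemma cosh_bound: "exp (z::real) + exp (-z) \<ge> 2 + z^2"
  using exp_taylor3[of z] exp_taylor3[of "-z"] by (simp add: power2_eq_square power3_eq_cube)

lemma key_E: fixes z :: real
  shows "4 * \<bar>z\<bar> * exp z \<le> (1 + exp z)^2" and "4 * exp z \<le> (1 + exp z)^2"
proof -
  define E where "E = exp z"
  have E: "E > 0" by (simp add: E_def)
  have "exp (-z) = 1/E" by (simp add: E_def exp_minus field_simps)
  with cosh_bound[of z] have "E + 1/E \<ge> 2 + z^2" by (simp add: E_def)
  hence "E*E + 1 \<ge> (2 + z^2) * E" using E by (simp add: field_simps)
  moreover have "4 * \<bar>z\<bar> \<le> 4 + z^2"
    using zero_le_power2[of "\<bar>z\<bar> - 2"] by (simp add: power2_eq_square algebra_simps)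
  ultimately have "4 * \<bar>z\<bar> * E \<le> (1+E)^2"
    using E mult_right_mono[of "4 * \<bar>z\<bar>" "4 + z^2" E] by (simp add: power2_eq_square algebra_simps)
  thus "4 * \<bar>z\<bar> * exp z \<le> (1 + exp z)^2" by (simp add: E_def)
  have "4 * E \<le> (1+E)^2" using zero_le_power2[of "E - 1"] by (simp add: power2_eq_square algebra_simps)
  thus "4 * exp z \<le> (1 + exp z)^2" by (simp add: E_def)
qed

lemma sig_bound:
  fixes d t C0 C1 :: real
  assumes d: "d > 0" and C0: "C0 \<ge> 0" and C1: "C1 \<ge> 0"
  shows "exp (t/d) / (d * (1 + exp (t/d))^2) * (C0 + C1 * \<bar>t\<bar>) \<le> C0/(4*d) + C1/4"
proof -
  define z where "z = t/d"
  define E where "E = exp z"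
  have E: "E > 0" by (simp add: E_def)
  have P: "(1+E)^2 > 0" using E by simp
  have t: "\<bar>t\<bar> = d * \<bar>z\<bar>" using d by (simp add: z_def abs_mult)
  have k1: "4 * \<bar>z\<bar> * E \<le> (1+E)^2" and k2: "4 * E \<le> (1+E)^2"
    using key_E[of z] by (simp_all add: E_def)
  have a1: "E / (1+E)^2 \<le> 1/4" using k2 P by (simp add: field_simps)
  have a2: "E * \<bar>z\<bar> / (1+E)^2 \<le> 1/4" using k1 P by (simp add: field_simps)
  have "exp (t/d) / (d * (1 + exp (t/d))^2) * (C0 + C1 * \<bar>t\<bar>)
      = C0 / d * (E / (1+E)^2) + C1 * (E * \<bar>z\<bar> / (1+E)^2)"
  proof -
    have tz: "t/d = z" by (simp add: z_def)
    have ne: "(1+E)^2 \<noteq> 0" "d \<noteq> 0" using P d by auto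
    show ?thesis unfolding tz t E_def[symmetric] using ne by (simp add: divide_simps) (simp add: algebra_simps)
  qed
  also have "\<dots> \<le> C0 / d * (1/4) + C1 * (1/4)"
    using a1 a2 C0 C1 d by (intro add_mono mult_left_mono) auto
  finally show ?thesis by simp
qed


lemma segment_bound:
  fixes \<phi> :: "real \<Rightarrow> 'a::real_normed_vector" and M :: real
  assumes cont: "continuous_on {0..1} \<phi>"
    and loc: "\<And>s. 0 \<le> s \<Longrightarrow> s < 1 \<Longrightarrow> \<exists>d>0. \<forall>t. s < t \<and> t < s + d \<longrightarrow> norm (\<phi> t - \<phi> s) \<le> M * (t - s)"
  shows "norm (\<phi> 1 - \<phi> 0) \<le> M"
proof -
  define T where "T = {t \<in> {0..1}. norm (\<phi> t - \<phi> 0) \<le> M * t}"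
  have "closed T" unfolding T_def
    by (intro continuous_on_closed_Collect_le continuous_intros cont)
  moreover have "T \<subseteq> {0..1}" by (auto simp: T_def)
  ultimately have "compact T"
    by (meson compact_eq_bounded_closed bounded_subset compact_Icc compact_imp_bounded)
  moreover have "0 \<in> T" by (simp add: T_def)
  ultimately obtain s where sT: "s \<in> T" and smax: "\<forall>t\<in>T. t \<le> s"
    using compact_attains_sup[of T] by blast
  have "s = 1"
  proof (rule ccontr)
    assume "s \<noteq> 1"
    with sT have s01: "0 \<le> s" "s < 1" by (auto simp: T_def)
    then obtain d where d: "d > 0" and dd: "\<forall>t. s < t \<and> t < s + d \<longrightarrow> norm (\<phi> t - \<phi> s) \<le> M * (t - s)"
      using loc by blast
    define t where "t = min (s + d/2) 1"
    have ts: "s < t" "t < s + d" "t \<le> 1" using d s01 by (auto simp: t_def)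
    have "norm (\<phi> t - \<phi> 0) \<le> norm (\<phi> t - \<phi> s) + norm (\<phi> s - \<phi> 0)"
      using norm_triangle_ineq[of "\<phi> t - \<phi> s" "\<phi> s - \<phi> 0"] by simp
    also have "\<dots> \<le> M * (t - s) + M * s" using dd ts sT by (intro add_mono) (auto simp: T_def)
    finally have "t \<in> T" using ts s01 by (simp add: T_def algebra_simps)
    with smax ts show False by auto
  qed
  with sT show ?thesis by (simp add: T_def)
qed

theorem proposition3:
  fixes a :: "'n::euclidean_space \<Rightarrow> real"
    and ga :: "'n \<Rightarrow> 'n"
    and La C0 C1 \<delta> :: real
  assumes conv: "convex_on UNIV a"
    and smooth: "L_smooth a La"
    and grad: "\<And>x. (a has_derivative (\<lambda>h. ga x \<bullet> h)) (at x)"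
    and C0: "C0 > 0" and C1: "C1 \<ge> 0"
    and bound: "\<And>x. (norm (ga x))\<^sup>2 \<le> C0 + C1 * \<bar>a x\<bar>"
    and \<delta>: "\<delta> > 0"
  shows "L_smooth (\<lambda>x. softplus \<delta> (a x)) (La + C1 / 4 + C0 / (4 * \<delta>))"
proof -
  define K where "K = La + C1 / 4 + C0 / (4 * \<delta>)"
  define s where "s t = exp (t/\<delta>) / (1 + exp (t/\<delta>))" for t
  define s' where "s' t = exp (t/\<delta>) / (\<delta> * (1 + exp (t/\<delta>))^2)" for t
  have pos: "1 + exp (t/\<delta>) > 0" for t by (simp add: add_pos_pos)
  have sp_deriv: "(softplus \<delta> has_real_derivative s t) (at t)" for t
  proof -
    have "((\<lambda>t. \<delta> * ln (1 + exp (t / \<delta>))) has_real_derivative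
           \<delta> * ((exp (t/\<delta>) * (1/\<delta>)) / (1 + exp (t/\<delta>)))) (at t)"
      using pos[of t] by (auto intro!: derivative_eq_intros)
    moreover have "\<delta> * ((exp (t/\<delta>) * (1/\<delta>)) / (1 + exp (t/\<delta>))) = s t"
      using \<delta> by (simp add: s_def)
    ultimately show ?thesis unfolding softplus_def[abs_def] by simp
  qed
  have s_deriv: "(s has_real_derivative s' t) (at t)" for t
  proof -
    have "(s has_real_derivative
           ((exp (t/\<delta>) * (1/\<delta>)) * (1 + exp (t/\<delta>)) - exp (t/\<delta>) * (exp (t/\<delta>) * (1/\<delta>)))
             / ((1 + exp (t/\<delta>)) * (1 + exp (t/\<delta>)))) (at t)"
      unfolding s_def[abs_def] using pos[of t] \<delta> by (auto intro!: derivative_eq_intros)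
    moreover have "((exp (t/\<delta>) * (1/\<delta>)) * (1 + exp (t/\<delta>)) - exp (t/\<delta>) * (exp (t/\<delta>) * (1/\<delta>)))
             / ((1 + exp (t/\<delta>)) * (1 + exp (t/\<delta>))) = s' t"
      using \<delta> pos[of t] by (simp add: s'_def field_simps power2_eq_square)
    ultimately show ?thesis by simp
  qed
  have s01: "0 \<le> s t" "s t \<le> 1" for t using pos[of t] by (auto simp: s_def)
  have s'nn: "0 \<le> s' t" for t using \<delta> by (simp add: s'_def)
  define g where "g x = s (a x) *\<^sub>R ga x" for x
  have deriv: "((\<lambda>x. softplus \<delta> (a x)) has_derivative (\<lambda>h. g x \<bullet> h)) (at x)" for x
  proof -
    have "((\<lambda>x. softplus \<delta> (a x)) has_derivative (\<lambda>h. (ga x \<bullet> h) * s (a x))) (at x)"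
      by (rule DERIV_compose_FDERIV[OF sp_deriv grad])
    moreover have "(\<lambda>h. (ga x \<bullet> h) * s (a x)) = (\<lambda>h. g x \<bullet> h)"
      by (auto simp: g_def)
    ultimately show ?thesis by simp
  qed
  obtain g0 where g0d: "\<And>x. (a has_derivative (\<lambda>h. g0 x \<bullet> h)) (at x)"
    and g0L: "\<And>x y. norm (g0 x - g0 y) \<le> La * norm (x - y)"
    using smooth unfolding L_smooth_def by blast
  have g0eq: "g0 x = ga x" for x
  proof -
    have "(\<lambda>h. g0 x \<bullet> h) = (\<lambda>h. ga x \<bullet> h)" using has_derivative_unique[OF g0d grad] .
    hence "g0 x \<bullet> (g0 x - ga x) = ga x \<bullet> (g0 x - ga x)" by (rule fun_cong)
    hence "(g0 x - ga x) \<bullet> (g0 x - ga x) = 0" by (simp add: inner_diff_left)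
    thus ?thesis by simp
  qed
  have Lip: "norm (ga x - ga y) \<le> La * norm (x - y)" for x y using g0L[of x y] by (simp add: g0eq)
  have LaNN: "La \<ge> 0"
  proof -
    obtain b :: 'n where "b \<in> Basis" using nonempty_Basis by blast
    hence "norm b = 1" by simp
    with Lip[of b 0] have "norm (ga b - ga 0) \<le> La" by simp
    thus ?thesis using norm_ge_zero[of "ga b - ga 0"] by linarith
  qed
  have sb: "s' (a u) * (norm (ga u))^2 \<le> C0/(4*\<delta>) + C1/4" for u
  proof -
    have "s' (a u) * (norm (ga u))^2 \<le> s' (a u) * (C0 + C1 * \<bar>a u\<bar>)"
      using bound[of u] s'nn by (intro mult_left_mono) auto
    also have "\<dots> \<le> C0/(4*\<delta>) + C1/4" unfolding s'_def using sig_bound[OF \<delta>, of C0 C1 "a u"] C0 C1 by simp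
    finally show ?thesis .
  qed
  have local: "\<exists>d>0. \<forall>v. norm (v - u) < d \<longrightarrow> norm (g v - g u) \<le> (K + \<epsilon>) * norm (v - u)"
    if \<epsilon>: "\<epsilon> > 0" for u \<epsilon>
  proof -
    have "((\<lambda>x. s (a x)) has_derivative (\<lambda>h. (ga u \<bullet> h) * s' (a u))) (at u)"
      by (rule DERIV_compose_FDERIV[OF s_deriv grad])
    then have "\<forall>e>0. \<exists>d>0. \<forall>v. norm (v - u) < d \<longrightarrow>
        norm (s (a v) - s (a u) - (ga u \<bullet> (v - u)) * s' (a u)) \<le> e * norm (v - u)"
      unfolding has_derivative_at_alt by blast
    moreover define e where "e = \<epsilon> / (norm (ga u) + 1)"
    moreover have e: "e > 0" using \<epsilon> by (simp add: e_def add_nonneg_pos)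
    ultimately obtain d where d: "d > 0" and dd: "\<And>v. norm (v - u) < d \<Longrightarrow>
        \<bar>s (a v) - s (a u) - (ga u \<bullet> (v - u)) * s' (a u)\<bar> \<le> e * norm (v - u)" by auto
    have en: "e * norm (ga u) \<le> \<epsilon>"
    proof -
      have "norm (ga u) / (norm (ga u) + 1) \<le> 1" using norm_ge_zero[of "ga u"] by (simp add: divide_le_eq not_less add_nonneg_nonneg)
      hence "\<epsilon> * (norm (ga u) / (norm (ga u) + 1)) \<le> \<epsilon> * 1" using \<epsilon> by (intro mult_left_mono) auto
      thus ?thesis by (simp add: e_def)
    qed
    show ?thesis
    proof (intro exI[of _ d] conjI allI impI d)
      fix v assume v: "norm (v - u) < d"
      define n where "n = norm (v - u)"
      define G where "G = norm (ga u)"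
      have n: "n \<ge> 0" "G \<ge> 0" by (simp_all add: n_def G_def)
      have "g v - g u = s (a v) *\<^sub>R (ga v - ga u) + (s (a v) - s (a u)) *\<^sub>R ga u"
        by (simp add: g_def algebra_simps)
      hence "norm (g v - g u) \<le> norm (s (a v) *\<^sub>R (ga v - ga u)) + norm ((s (a v) - s (a u)) *\<^sub>R ga u)"
        by (metis norm_triangle_ineq)
      also have "norm (s (a v) *\<^sub>R (ga v - ga u)) \<le> La * n"
      proof -
        have "norm (s (a v) *\<^sub>R (ga v - ga u)) = s (a v) * norm (ga v - ga u)" using s01 by simp
        also have "\<dots> \<le> 1 * norm (ga v - ga u)" using s01 by (intro mult_right_mono) auto
        also have "\<dots> \<le> La * n" using Lip[of v u] by (simp add: n_def)
        finally show ?thesis .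
      qed
      also have "norm ((s (a v) - s (a u)) *\<^sub>R ga u) \<le> (C0/(4*\<delta>) + C1/4 + \<epsilon>) * n"
      proof -
        have ci: "\<bar>ga u \<bullet> (v - u)\<bar> \<le> G * n" unfolding G_def n_def by (rule Cauchy_Schwarz_ineq2)
        have "\<bar>s (a v) - s (a u)\<bar> \<le> \<bar>(ga u \<bullet> (v - u)) * s' (a u)\<bar> + e * n"
          using dd[OF v] unfolding n_def by linarith
        also have "\<dots> \<le> G * n * s' (a u) + e * n"
          using ci s'nn by (simp add: abs_mult mult_right_mono)
        finally have h: "\<bar>s (a v) - s (a u)\<bar> \<le> G * n * s' (a u) + e * n" .
        have "norm ((s (a v) - s (a u)) *\<^sub>R ga u) = \<bar>s (a v) - s (a u)\<bar> * G" by (simp add: G_def)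
        also have "\<dots> \<le> (G * n * s' (a u) + e * n) * G" using h n by (intro mult_right_mono) auto
        also have "\<dots> = (s' (a u) * G^2) * n + (e * G) * n" by (simp add: algebra_simps power2_eq_square)
        also have "\<dots> \<le> (C0/(4*\<delta>) + C1/4) * n + \<epsilon> * n"
          using sb[of u] en n unfolding G_def by (intro add_mono mult_right_mono) auto
        finally show ?thesis by (simp add: algebra_simps)
      qed
      finally show "norm (g v - g u) \<le> (K + \<epsilon>) * norm (v - u)"
        by (simp add: K_def n_def algebra_simps)
    qed
  qed
  have gcont: "continuous_on UNIV g"
  proof -
    have "continuous_on UNIV a" using grad
      by (meson continuous_at_imp_continuous_on has_derivative_continuous)
    moreover have "continuous_on UNIV s"
      using s_deriv by (meson continuous_at_imp_continuous_on DERIV_isCont)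
    moreover have "continuous_on UNIV ga"
      by (rule lipschitz_on_continuous_on[of La]) (auto intro!: lipschitz_onI simp: LaNN dist_norm Lip)
    ultimately have "continuous_on UNIV (\<lambda>x. s (a x))"
      by (intro continuous_on_compose2[of UNIV s UNIV a]) auto
    thus ?thesis unfolding g_def[abs_def]
      using \<open>continuous_on UNIV ga\<close> by (intro continuous_on_scaleR)
  qed
  have glob: "norm (g x - g y) \<le> K * norm (x - y)" for x y
  proof (cases "x = y")
    case True then show ?thesis by simp
  next
    case False
    define N where "N = norm (x - y)"
    have N: "N > 0" using False by (simp add: N_def)
    show ?thesis
    proof (rule field_le_epsilon)
      fix e :: real assume e: "e > 0"
      define \<epsilon> where "\<epsilon> = e / N"
      have \<epsilon>: "\<epsilon> > 0" using e N by (simp add: \<epsilon>_def)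
      define \<phi> where "\<phi> t = g (y + t *\<^sub>R (x - y))" for t
      have "norm (\<phi> 1 - \<phi> 0) \<le> (K + \<epsilon>) * N"
      proof (rule segment_bound)
        show "continuous_on {0..1} \<phi>" unfolding \<phi>_def
          by (rule continuous_on_compose2[OF gcont]) (auto intro!: continuous_intros)
      next
        fix s0 :: real assume "0 \<le> s0" "s0 < 1"
        obtain d where d: "d > 0" and dd: "\<forall>v. norm (v - (y + s0 *\<^sub>R (x - y))) < d \<longrightarrow>
           norm (g v - g (y + s0 *\<^sub>R (x - y))) \<le> (K + \<epsilon>) * norm (v - (y + s0 *\<^sub>R (x - y)))"
          using local[OF \<epsilon>] by blast
        show "\<exists>d>0. \<forall>t. s0 < t \<and> t < s0 + d \<longrightarrow> norm (\<phi> t - \<phi> s0) \<le> (K + \<epsilon>) * N * (t - s0)"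
        proof (intro exI[of _ "d / N"] conjI allI impI)
          show "d / N > 0" using d N by simp
          fix t assume t: "s0 < t \<and> t < s0 + d / N"
          have eq: "(y + t *\<^sub>R (x - y)) - (y + s0 *\<^sub>R (x - y)) = (t - s0) *\<^sub>R (x - y)"
            by (simp add: algebra_simps)
          have nn: "norm ((t - s0) *\<^sub>R (x - y)) = (t - s0) * N" using t by (simp add: N_def)
          have "(t - s0) * N < d" using t N by (simp add: field_simps)
          hence "norm ((y + t *\<^sub>R (x - y)) - (y + s0 *\<^sub>R (x - y))) < d" using eq nn by simp
          with dd have "norm (g (y + t *\<^sub>R (x - y)) - g (y + s0 *\<^sub>R (x - y))) \<le> (K + \<epsilon>) * norm ((y + t *\<^sub>R (x - y)) - (y + s0 *\<^sub>R (x - y)))"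
            by blast
          hence "norm (\<phi> t - \<phi> s0) \<le> (K + \<epsilon>) * ((t - s0) * N)"
            unfolding \<phi>_def eq nn .
          thus "norm (\<phi> t - \<phi> s0) \<le> (K + \<epsilon>) * N * (t - s0)" by (simp add: algebra_simps)
        qed
      qed
      moreover have "\<phi> 1 = g x" "\<phi> 0 = g y" by (simp_all add: \<phi>_def)
      moreover have "(K + \<epsilon>) * N = K * N + e" using N by (simp add: \<epsilon>_def algebra_simps)
      ultimately show "norm (g x - g y) \<le> K * norm (x - y) + e" by (simp add: N_def)
    qed
  qed
  show ?thesis unfolding L_smooth_def K_def[symmetric]
    using deriv glob by blast
qed

end
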